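(* Fix an integer $k\ge 3$. There exist a constant $c>0$ and $n_0$ (depending only on $k$) such that for every even $n\ge n_0$ and all $\mathbf{x},\mathbf{x}'\in\{0,1\}^{n/2}$ with $D:=|\mathbf{x}|-|\mathbf{x}'|\ge 0$, $$C_k(G^{\mathbf{x}})-C_k(G^{\mathbf{x}'})\ \ge\ c\,n^{k-2}D,$$ i.e. $C_k(G^{\mathbf{x}})-C_k(G^{\mathbf{x}'})=\Omega(n^{k-2}\cdot D)$.
   Context: For even $n$ and $\mathbf{x}=(x_1,\dots,x_{n/2})\in\{0,1\}^{n/2}$, the graph $G^{\mathbf{x}}=(V,E^{\mathbf{x}})$ has $V=\{v_1,\dots,v_n\}$; every pair $\{u,v\}$ of distinct nodes that is not of the form $\{v_{2i-1},v_{2i}\}$ is an edge, and for $1\le i\le n/2$ the pair $\{v_{2i-1},v_{2i}\}$ is an edge iff $x_i=1$. $|\mathbf{x}|$ denotes the number of ones in $\mathbf{x}$. $C_k(G)$ is the number of subgraphs of $G$ isomorphic to the cycle on $k$ vertices. *)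

theory Defs
  imports Complex_Main
begin

text \<open>Vertices v_1..v_n are encoded as 0..n-1 (v_j as j-1), so the pair
  {v_(2i-1), v_(2i)} (1 <= i <= n/2) is {2(i-1), 2(i-1)+1}.  A vector
  x in {0,1}^(n/2) is encoded as x :: nat => bool with x_i = 1 iff x (i-1),
  only the indices i < n div 2 being relevant.\<close>

definition GX_edge :: "nat \<Rightarrow> (nat \<Rightarrow> bool) \<Rightarrow> nat \<Rightarrow> nat \<Rightarrow> bool" where
  "GX_edge n x u v \<longleftrightarrow> u < n \<and> v < n \<and> u \<noteq> v \<and>
     (u div 2 = v div 2 \<longrightarrow> x (u div 2))"

definition weight :: "nat \<Rightarrow> (nat \<Rightarrow> bool) \<Rightarrow> nat" where
  "weight n x = card {i. i < n div 2 \<and> x i}"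

definition cycle_edges :: "nat list \<Rightarrow> nat set set" where
  "cycle_edges vs = {{vs ! j, vs ! ((j + 1) mod length vs)} | j. j < length vs}"

text \<open>Such a subgraph has no isolated vertices, so it is determined by its
  edge set, which is the edge set of a cyclic sequence of k distinct vertices
  all of whose consecutive pairs are edges of G.\<close>
definition cycle_count :: "(nat \<Rightarrow> nat \<Rightarrow> bool) \<Rightarrow> nat \<Rightarrow> nat" where
  "cycle_count E k = card {cycle_edges vs | vs.
      length vs = k \<and> distinct vs \<and>
      (\<forall>j < k. E (vs ! j) (vs ! ((j + 1) mod k)))}"

end

theory Submission
  imports Defs "HOL-Library.FuncSet"
begin


definition Sx :: "nat \<Rightarrow> (nat \<Rightarrow> bool) \<Rightarrow> nat \<Rightarrow> nat set set set" where
  "Sx n x k = {cycle_edges vs | vs. length vs = k \<and> distinct vs \<and>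
      (\<forall>j < k. GX_edge n x (vs ! j) (vs ! ((j + 1) mod k)))}"

lemma cc_Sx: "cycle_count (GX_edge n x) k = card (Sx n x k)"
  unfolding cycle_count_def Sx_def by simp

lemma Sx_finite: "finite (Sx n x k)"
proof -
  have "Sx n x k \<subseteq> cycle_edges ` {vs. set vs \<subseteq> {..<n} \<and> length vs = k}"
  proof
    fix E assume "E \<in> Sx n x k"
    then obtain vs where E: "E = cycle_edges vs" and l: "length vs = k" and
      e: "\<forall>j < k. GX_edge n x (vs ! j) (vs ! ((j + 1) mod k))"
      unfolding Sx_def by blast
    have "set vs \<subseteq> {..<n}"
    proof
      fix a assume "a \<in> set vs"
      then obtain j where "j < k" "a = vs ! j" using l by (auto simp: in_set_conv_nth)
      then show "a \<in> {..<n}" using e unfolding GX_edge_def by auto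
    qed
    then show "E \<in> cycle_edges ` {vs. set vs \<subseteq> {..<n} \<and> length vs = k}" using E l by blast
  qed
  moreover have "finite {vs. set vs \<subseteq> {..<n} \<and> length vs = k}"
    by (rule finite_lists_length_eq) simp
  ultimately show ?thesis by (meson finite_surj)
qed

lemma Sx_mono:
  assumes "\<forall>i<n div 2. y i \<longrightarrow> x i"
  shows "Sx n y k \<subseteq> Sx n x k"
proof -
  have "GX_edge n x a b" if "GX_edge n y a b" for a b
  proof -
    have "b div 2 < n div 2" if "a < n" "b < n" "a \<noteq> b" "a div 2 = b div 2" for a b :: nat
      using that by presburger
    then show ?thesis using that assms unfolding GX_edge_def by metis
  qed
  then show ?thesis unfolding Sx_def by blast
qed

lemma cycle_edges_inj:
  assumes "distinct vs" "distinct ws" "length vs = k" "length ws = k" "k \<ge> 3"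
    "vs ! 0 = ws ! 0" "vs ! 1 = ws ! 1" "cycle_edges vs = cycle_edges ws"
  shows "vs = ws"
proof -
  have "\<forall>i\<le>j. vs ! i = ws ! i" if "j < k" for j
    using that
  proof (induction j)
    case 0 then show ?case using assms by simp
  next
    case (Suc j)
    note IH = Suc.IH[OF Suc_lessD[OF Suc.prems]]
    show ?case
    proof (cases "j = 0")
      case True then show ?thesis using assms by (auto simp: le_Suc_eq)
    next
      case False
      have "{vs ! j, vs ! Suc j} \<in> cycle_edges vs"
        unfolding cycle_edges_def using Suc.prems assms
        by (intro CollectI exI[of _ j]) auto
      then have "{vs ! j, vs ! Suc j} \<in> cycle_edges ws" using assms by simp
      then obtain i where i: "i < k" "{vs ! j, vs ! Suc j} = {ws ! i, ws ! ((i+1) mod k)}"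
        unfolding cycle_edges_def using assms by auto
      have vj: "vs ! j = ws ! j" using IH by simp
      have jk: "j < k" "Suc j < k" using Suc.prems by auto
      have "vs ! Suc j = ws ! Suc j"
      proof (cases "ws ! j = ws ! i")
        case True
        then have "i = j" using assms(2,4) i(1) jk nth_eq_iff_index_eq by metis
        moreover have "vs ! Suc j \<noteq> vs ! j" using assms(1,3) jk nth_eq_iff_index_eq by fastforce
        ultimately show ?thesis using i(2) vj jk by (auto simp: doubleton_eq_iff)
      next
        case False
        then have a: "ws ! j = ws ! ((i+1) mod k)" "vs ! Suc j = ws ! i"
          using i(2) vj by (auto simp: doubleton_eq_iff)
        have "j = (i+1) mod k" using a(1) assms(2,4) jk nth_eq_iff_index_eq
          by (metis mod_less_divisor not_less_zero gr0I)
        then have "i = j - 1" using \<open>j \<noteq> 0\<close> i(1)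
          by (cases "i + 1 = k") auto
        then have "vs ! Suc j = vs ! (j - 1)" using a IH by simp
        moreover have "Suc j \<noteq> j - 1" by simp
        ultimately have False using assms(1,3) jk nth_eq_iff_index_eq by (metis less_imp_diff_less)
        then show ?thesis ..
      qed
      then show ?thesis using IH by (auto simp: le_Suc_eq)
    qed
  qed
  then show ?thesis using assms by (intro nth_equalityI) auto
qed



lemma cyc_edges_ok:
  assumes "set vs \<subseteq> {..<n}" "distinct vs" "length vs = k" "k \<ge> 2"
    "\<forall>a\<in>set vs. \<forall>b\<in>set vs. a \<noteq> b \<and> a div 2 = b div 2 \<longrightarrow> x (a div 2)"
  shows "\<forall>j<k. GX_edge n x (vs ! j) (vs ! ((j + 1) mod k))"
proof (intro allI impI)
  fix j assume j: "j < k"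
  have j1: "(j+1) mod k < k" using j by simp
  have "j \<noteq> (j+1) mod k"
    using j assms(4) by (cases "j + 1 = k") auto
  then have ne: "vs ! j \<noteq> vs ! ((j+1) mod k)" using assms(2,3) j j1 nth_eq_iff_index_eq by metis
  have in1: "vs ! j \<in> set vs" "vs ! ((j+1) mod k) \<in> set vs" using j j1 assms(3) by auto
  then show "GX_edge n x (vs ! j) (vs ! ((j + 1) mod k))"
    unfolding GX_edge_def using ne assms(1,5) by auto
qed

lemma inc:
  assumes k3: "k \<ge> 3" and p: "p < n div 2" and xp: "x p" and yp: "\<not> y p"
    and yx: "\<forall>i<n div 2. y i \<longrightarrow> x i" and n8: "n \<ge> 8 * k"
  shows "real (card (Sx n y k)) + (real n / (2 * real k)) ^ (k - 2) \<le> real (card (Sx n x k))"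
proof -
  define h where "h = n div (2 * k)"
  define L where "L = k - 2"
  define u where "u = 2 * p"
  define v where "v = 2 * p + 1"
  define B where "B = (\<lambda>i. {i * (2*h)..<(i+1)*(2*h)} - {u, v})"
  define g where "g = (\<lambda>f. cycle_edges (u # v # map f [0..<L]))"
  define F where "F = g ` (PiE {..<L} B)"
  have hpos: "h > 0" unfolding h_def using n8 k3 by (simp add: div_greater_zero_iff)
  have hk: "2 * k * h \<le> n" unfolding h_def by (metis div_mult_self1_is_m mult.commute times_div_less_eq_dividend)
  have uv: "u div 2 = p" "v div 2 = p" "u < n" "v < n" "u \<noteq> v" unfolding u_def v_def using p by auto
  have Bprops: "a < n \<and> a div 2 \<noteq> p \<and> a div 2 div h = i"
    if "i < L" "a \<in> B i" for i a
  proof -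
    have a: "i * (2*h) \<le> a" "a < (i+1)*(2*h)" "a \<noteq> u" "a \<noteq> v" using that unfolding B_def by auto
    have "(i+1)*(2*h) \<le> k * (2*h)" using that(1) unfolding L_def by (intro mult_le_mono1) simp
    then have "a < n" using a hk by (metis mult.commute mult.left_commute order_less_le_trans order_le_less_trans less_le_trans)
    moreover have "a div 2 \<noteq> p" using a unfolding u_def v_def by presburger
    moreover have "a div 2 div h = i"
    proof -
      have "(2 * (i * h)) div 2 \<le> a div 2" using a by (intro div_le_mono) (simp add: mult.commute mult.left_commute)
      then have 1: "i * h \<le> a div 2" by simp
      have 2: "a div 2 < (i+1) * h" using a by (intro less_mult_imp_div_less) (simp add: mult.commute mult.left_commute)
      note 1 2
      then show ?thesis using hpos by (simp add: div_nat_eqI mult.commute)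
    qed
    ultimately show ?thesis by blast
  qed
  define vsf where "vsf = (\<lambda>f. u # v # map f [0..<L])"
  have vsf_ok: "length (vsf f) = k \<and> distinct (vsf f) \<and>
      (\<forall>j<k. GX_edge n x (vsf f ! j) (vsf f ! ((j + 1) mod k)))" if f: "f \<in> PiE {..<L} B" for f
  proof -
    have fB: "\<And>i. i < L \<Longrightarrow> f i \<in> B i" using f by auto
    have len: "length (vsf f) = k" unfolding vsf_def L_def using k3 by simp
    have injf: "inj_on f {..<L}"
      by (rule inj_onI) (metis Bprops fB lessThan_iff)
    have nu: "u \<notin> f ` {..<L}" "v \<notin> f ` {..<L}" using fB unfolding B_def by auto
    have dist: "distinct (vsf f)"
      unfolding vsf_def using uv(5) injf nu by (simp add: distinct_map atLeast0LessThan)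
    have setv: "set (vsf f) = {u, v} \<union> f ` {..<L}" unfolding vsf_def by auto
    have "\<forall>j<k. GX_edge n x (vsf f ! j) (vsf f ! ((j + 1) mod k))"
    proof (rule cyc_edges_ok[OF _ dist len])
      show "set (vsf f) \<subseteq> {..<n}" using setv uv Bprops fB by auto
      show "2 \<le> k" using k3 by simp
      show "\<forall>a\<in>set (vsf f). \<forall>b\<in>set (vsf f). a \<noteq> b \<and> a div 2 = b div 2 \<longrightarrow> x (a div 2)"
        unfolding setv using uv xp Bprops fB by auto (metis lessThan_iff)+
    qed
    then show ?thesis using len dist by blast
  qed
  have FS: "F \<subseteq> Sx n x k"
    unfolding F_def g_def Sx_def using vsf_ok unfolding vsf_def by blast
  have FnS: "F \<inter> Sx n y k = {}"
  proof (rule ccontr)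
    assume "F \<inter> Sx n y k \<noteq> {}"
    then obtain f ws where f: "f \<in> PiE {..<L} B" and ws: "length ws = k"
        "\<forall>j<k. GX_edge n y (ws ! j) (ws ! ((j + 1) mod k))" and eq: "g f = cycle_edges ws"
      unfolding F_def Sx_def by auto
    have "{u, v} \<in> g f" unfolding g_def cycle_edges_def
      using k3 by (intro CollectI exI[of _ 0]) auto
    then obtain j where j: "j < k" "{u, v} = {ws ! j, ws ! ((j + 1) mod k)}"
      using eq ws unfolding cycle_edges_def by auto
    have "GX_edge n y (ws ! j) (ws ! ((j + 1) mod k))" using ws j by auto
    then show False using j(2) uv yp unfolding GX_edge_def by (auto simp: doubleton_eq_iff)
  qed
  have injg: "inj_on g (PiE {..<L} B)"
  proof (rule inj_onI)
    fix f1 f2 assume f1: "f1 \<in> PiE {..<L} B" and f2: "f2 \<in> PiE {..<L} B" and eq: "g f1 = g f2"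
    have e: "cycle_edges (vsf f1) = cycle_edges (vsf f2)" using eq unfolding g_def vsf_def by simp
    have "vsf f1 ! 0 = vsf f2 ! 0" "vsf f1 ! 1 = vsf f2 ! 1" unfolding vsf_def by simp_all
    then have "vsf f1 = vsf f2"
      using cycle_edges_inj[OF _ _ _ _ k3 _ _ e] vsf_ok[OF f1] vsf_ok[OF f2] by blast
    then have "map f1 [0..<L] = map f2 [0..<L]" unfolding vsf_def by simp
    then have "\<And>i. i \<in> {..<L} \<Longrightarrow> f1 i = f2 i" by (simp add: map_eq_conv)
    then show "f1 = f2" using PiE_ext[OF f1 f2] by blast
  qed
  have cardF: "card F = (\<Prod>i<L. card (B i))"
    unfolding F_def using card_image[OF injg] card_PiE[of "{..<L}" B] by simp
  have cardB: "real n / (2 * real k) \<le> real (card (B i))" for i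
  proof -
    have "card {i * (2*h)..<(i+1)*(2*h)} - card {u, v} \<le> card (B i)"
      unfolding B_def by (rule diff_card_le_card_Diff) simp
    moreover have "card {u, v} \<le> 2" by (simp add: card_insert_le_m1)
    ultimately have "2 * h - 2 \<le> card (B i)" by simp
    moreover have "h \<ge> 1" using hpos by simp
    ultimately have c1: "2 * real h - 2 \<le> real (card (B i))" by linarith
    have m1: "n mod (2*k) < 2*k" using k3 by simp
    have m2: "2*k*h + n mod (2*k) = n" unfolding h_def by (rule mult_div_mod_eq)
    have "n < 2 * k * (h + 1)" using m1 m2 by (simp add: algebra_simps)
    then have "real n < real (2 * k * (h + 1))" by (simp only: of_nat_less_iff)
    then have "real n < 2 * real k * (real h + 1)" by (simp add: algebra_simps)
    then have "real n / (2 * real k) < real h + 1" using k3 by (simp add: divide_less_eq mult.commute)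
    moreover have "real n / (2 * real k) \<ge> 4" using n8 k3 by (simp add: le_divide_eq)
    ultimately show ?thesis using c1 by linarith
  qed
  have "(real n / (2 * real k)) ^ (k - 2) = (\<Prod>i<L. real n / (2 * real k))" unfolding L_def by simp
  also have "\<dots> \<le> (\<Prod>i<L. real (card (B i)))"
    by (rule prod_mono) (auto intro: cardB)
  also have "\<dots> = real (card F)" unfolding cardF by simp
  finally have Fb: "(real n / (2 * real k)) ^ (k - 2) \<le> real (card F)" .
  have "card (Sx n y k) + card F = card (Sx n y k \<union> F)"
    using FnS Sx_finite finite_subset[OF FS Sx_finite] by (simp add: card_Un_disjoint inf_commute)
  also have "\<dots> \<le> card (Sx n x k)"
    using FS Sx_mono[OF yx] Sx_finite by (intro card_mono) auto
  finally show ?thesis using Fb by linarith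
qed



lemma chain:
  assumes k3: "k \<ge> 3" and n8: "n \<ge> 8 * k"
  shows "\<forall>y x. (\<forall>i<n div 2. y i \<longrightarrow> x i) \<longrightarrow> card {i. i < n div 2 \<and> x i \<and> \<not> y i} = d \<longrightarrow>
     real (card (Sx n y k)) + real d * (real n / (2 * real k)) ^ (k - 2) \<le> real (card (Sx n x k))"
proof (induction d)
  case 0
  show ?case
  proof (intro allI impI)
    fix y x assume yx: "\<forall>i<n div 2. y i \<longrightarrow> x i"
    have "card (Sx n y k) \<le> card (Sx n x k)" using Sx_mono[OF yx] Sx_finite by (rule card_mono[rotated])
    then show "real (card (Sx n y k)) + real 0 * (real n / (2 * real k)) ^ (k - 2) \<le> real (card (Sx n x k))"
      by simp
  qed
next
  case (Suc d)
  show ?case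
  proof (intro allI impI)
    fix y x assume yx: "\<forall>i<n div 2. y i \<longrightarrow> x i" and c: "card {i. i < n div 2 \<and> x i \<and> \<not> y i} = Suc d"
    then obtain p where p: "p \<in> {i. i < n div 2 \<and> x i \<and> \<not> y i}"
      by (metis card.empty ex_in_conv nat.distinct(1))
    define y' where "y' = y(p := True)"
    have y'x: "\<forall>i<n div 2. y' i \<longrightarrow> x i" using yx p unfolding y'_def by auto
    have "{i. i < n div 2 \<and> x i \<and> \<not> y' i} = {i. i < n div 2 \<and> x i \<and> \<not> y i} - {p}"
      unfolding y'_def by auto
    then have "card {i. i < n div 2 \<and> x i \<and> \<not> y' i} = d" using c p by simp
    then have h1: "real (card (Sx n y' k)) + real d * (real n / (2 * real k)) ^ (k - 2) \<le> real (card (Sx n x k))"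
      using Suc.IH y'x by blast
    have yy': "\<forall>i<n div 2. y i \<longrightarrow> y' i" unfolding y'_def by simp
    have pp: "p < n div 2" "y' p" "\<not> y p" using p unfolding y'_def by auto
    have h2: "real (card (Sx n y k)) + (real n / (2 * real k)) ^ (k - 2) \<le> real (card (Sx n y' k))"
      using inc[OF k3 pp(1) pp(2) pp(3) yy' n8] .
    show "real (card (Sx n y k)) + real (Suc d) * (real n / (2 * real k)) ^ (k - 2) \<le> real (card (Sx n x k))"
      using h1 h2 by (simp add: algebra_simps)
  qed
qed

lemma weight_split:
  assumes "\<forall>i<n div 2. y i \<longrightarrow> x i"
  shows "weight n x = weight n y + card {i. i < n div 2 \<and> x i \<and> \<not> y i}"
proof -
  have "{i. i < n div 2 \<and> x i} = {i. i < n div 2 \<and> y i} \<union> {i. i < n div 2 \<and> x i \<and> \<not> y i}"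
    using assms by auto
  moreover have "card ({i. i < n div 2 \<and> y i} \<union> {i. i < n div 2 \<and> x i \<and> \<not> y i}) =
      card {i. i < n div 2 \<and> y i} + card {i. i < n div 2 \<and> x i \<and> \<not> y i}"
    by (rule card_Un_disjoint) auto
  ultimately show ?thesis unfolding weight_def by simp
qed

lemma iso:
  assumes ev: "even n" and w: "weight n x' \<le> weight n x"
  shows "\<exists>y. (\<forall>i<n div 2. y i \<longrightarrow> x i) \<and> weight n y = weight n x' \<and>
     card (Sx n x' k) \<le> card (Sx n y k)"
proof -
  define m where "m = n div 2"
  define A' where "A' = {i. i < m \<and> x' i}"
  define A where "A = {i. i < m \<and> x i}"
  have fin: "finite A" "finite A'" unfolding A_def A'_def by auto
  have "card A' \<le> card A" using w unfolding weight_def A_def A'_def m_def .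
  then obtain B where B: "B \<subseteq> A" "card B = card A'" using obtain_subset_with_card_n by metis
  have finB: "finite B" using B fin finite_subset by blast
  obtain f where f: "bij_betw f A' B" using finite_same_card_bij[OF fin(2) finB] B by metis
  have A'm: "A' \<subseteq> {..<m}" and Bm: "B \<subseteq> {..<m}" using B unfolding A'_def A_def by auto
  have "card ({..<m} - A') = card ({..<m} - B)"
    using A'm Bm B(2) fin(2) finB by (simp add: card_Diff_subset)
  then obtain g where g: "bij_betw g ({..<m} - A') ({..<m} - B)"
    using finite_same_card_bij by (metis finite_Diff finite_lessThan)
  define \<tau> where "\<tau> = (\<lambda>i. if i \<in> A' then f i else g i)"
  have \<tau>m: "\<tau> i < m" if "i < m" for i
    using that f g Bm unfolding \<tau>_def bij_betw_def by auto
  have \<tau>inj: "inj_on \<tau> {..<m}"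
  proof (rule inj_onI)
    fix i j assume i: "i \<in> {..<m}" and j: "j \<in> {..<m}" and e: "\<tau> i = \<tau> j"
    have fi: "\<And>i. i \<in> A' \<Longrightarrow> f i \<in> B" and gi: "\<And>i. i \<in> {..<m} - A' \<Longrightarrow> g i \<in> {..<m} - B"
      using f g unfolding bij_betw_def by auto
    show "i = j"
    proof (cases "i \<in> A'"; cases "j \<in> A'")
      assume "i \<in> A'" "j \<in> A'" then show ?thesis using e f unfolding \<tau>_def bij_betw_def inj_on_def by auto
    next
      assume "i \<notin> A'" "j \<notin> A'" then show ?thesis using e g i j unfolding \<tau>_def bij_betw_def inj_on_def by auto
    next
      assume "i \<in> A'" "j \<notin> A'" then show ?thesis using e fi gi j unfolding \<tau>_def by fastforce
    next
      assume "i \<notin> A'" "j \<in> A'" then show ?thesis using e fi gi i unfolding \<tau>_def by fastforce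
    qed
  qed
  have \<tau>A: "\<tau> ` A' \<subseteq> A" using f B unfolding \<tau>_def bij_betw_def by auto
  define y where "y = (\<lambda>j. j \<in> \<tau> ` A')"
  have yx: "\<forall>i<n div 2. y i \<longrightarrow> x i" using \<tau>A unfolding y_def A_def by auto
  have "{i. i < n div 2 \<and> y i} = \<tau> ` A'" using \<tau>A unfolding y_def A_def m_def by auto
  then have wy: "weight n y = weight n x'"
    unfolding weight_def using card_image inj_on_subset[OF \<tau>inj A'm] unfolding A'_def m_def by metis
  define \<sigma> where "\<sigma> = (\<lambda>a::nat. 2 * \<tau> (a div 2) + a mod 2)"
  have nm: "n = 2 * m" using ev unfolding m_def by simp
  have \<sigma>n: "\<sigma> a < n" if "a < n" for a
  proof -
    have "a div 2 < m" using that nm by simp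
    then have "\<tau> (a div 2) < m" by (rule \<tau>m)
    then show ?thesis unfolding \<sigma>_def nm by simp
  qed
  have \<sigma>d: "\<sigma> a div 2 = \<tau> (a div 2)" "\<sigma> a mod 2 = a mod 2" for a unfolding \<sigma>_def by simp_all
  have \<sigma>inj: "inj_on \<sigma> {..<n}"
  proof (rule inj_onI)
    fix a b assume a: "a \<in> {..<n}" and b: "b \<in> {..<n}" and e: "\<sigma> a = \<sigma> b"
    have "\<tau> (a div 2) = \<tau> (b div 2)" using \<sigma>d e by metis
    moreover have "a div 2 \<in> {..<m}" "b div 2 \<in> {..<m}" using a b nm by auto
    ultimately have "a div 2 = b div 2" using \<tau>inj inj_on_def by metis
    moreover have "a mod 2 = b mod 2" using \<sigma>d e by metis
    ultimately show "a = b" by (metis div_mult_mod_eq)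
  qed
  have edge: "GX_edge n y (\<sigma> a) (\<sigma> b)" if "GX_edge n x' a b" for a b
  proof -
    have a: "a < n" "b < n" "a \<noteq> b" "a div 2 = b div 2 \<longrightarrow> x' (a div 2)" using that unfolding GX_edge_def by auto
    have am: "a div 2 < m" "b div 2 < m" using a nm by auto
    have "\<sigma> a \<noteq> \<sigma> b" using \<sigma>inj a inj_on_def by (metis lessThan_iff)
    moreover have "y (\<tau> (a div 2))" if "\<tau> (a div 2) = \<tau> (b div 2)"
    proof -
      have "a div 2 = b div 2" using that \<tau>inj am inj_on_def by (metis lessThan_iff)
      then have "a div 2 \<in> A'" using a am unfolding A'_def by auto
      then show ?thesis unfolding y_def by auto
    qed
    ultimately show ?thesis unfolding GX_edge_def using \<sigma>n a \<sigma>d by auto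
  qed
  define \<Phi> where "\<Phi> = (\<lambda>E::nat set set. (\<lambda>e. \<sigma> ` e) ` E)"
  have cel: "cycle_edges ws = (\<lambda>j. {ws ! j, ws ! ((j + 1) mod length ws)}) ` {..<length ws}" for ws
    unfolding cycle_edges_def by auto
  have ce: "cycle_edges (map \<sigma> vs) = \<Phi> (cycle_edges vs)" for vs
    unfolding cel \<Phi>_def image_image length_map
  proof (rule image_cong)
    fix j assume "j \<in> {..<length vs}"
    then have "j < length vs" by simp
    moreover then have "(j + 1) mod length vs < length vs" by (intro mod_less_divisor) linarith
    ultimately show "{map \<sigma> vs ! j, map \<sigma> vs ! ((j + 1) mod length vs)} = \<sigma> ` {vs ! j, vs ! ((j + 1) mod length vs)}"
      by simp
  qed simp
  have sub: "\<Phi> ` Sx n x' k \<subseteq> Sx n y k"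
  proof
    fix E assume "E \<in> \<Phi> ` Sx n x' k"
    then obtain vs where E: "E = \<Phi> (cycle_edges vs)" and l: "length vs = k" and d: "distinct vs" and
      e: "\<forall>j < k. GX_edge n x' (vs ! j) (vs ! ((j + 1) mod k))"
      unfolding Sx_def by blast
    have sv: "set vs \<subseteq> {..<n}"
    proof
      fix a assume "a \<in> set vs"
      then obtain j where "j < k" "a = vs ! j" using l by (auto simp: in_set_conv_nth)
      then show "a \<in> {..<n}" using e unfolding GX_edge_def by auto
    qed
    have "distinct (map \<sigma> vs)" using d inj_on_subset[OF \<sigma>inj sv] by (simp add: distinct_map)
    moreover have "\<forall>j < k. GX_edge n y (map \<sigma> vs ! j) (map \<sigma> vs ! ((j + 1) mod k))"
      using e edge l by (metis nth_map mod_less_divisor gr0I not_less_zero)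
    moreover have "E = cycle_edges (map \<sigma> vs)" using E ce by simp
    ultimately show "E \<in> Sx n y k" unfolding Sx_def using l
      by (intro CollectI exI[of _ "map \<sigma> vs"]) simp
  qed
  have SP: "Sx n x' k \<subseteq> Pow (Pow {..<n})"
  proof
    fix E assume "E \<in> Sx n x' k"
    then obtain vs where E: "E = cycle_edges vs" and l: "length vs = k" and
      e: "\<forall>j < k. GX_edge n x' (vs ! j) (vs ! ((j + 1) mod k))"
      unfolding Sx_def by blast
    show "E \<in> Pow (Pow {..<n})" unfolding E cycle_edges_def using e l unfolding GX_edge_def by auto
  qed
  have "inj_on \<Phi> (Pow (Pow {..<n}))" unfolding \<Phi>_def
    by (rule inj_on_image_Pow, rule inj_on_image_Pow, rule \<sigma>inj)
  then have "inj_on \<Phi> (Sx n x' k)" using SP inj_on_subset by blast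
  then have "card (Sx n x' k) = card (\<Phi> ` Sx n x' k)" by (simp add: card_image)
  also have "\<dots> \<le> card (Sx n y k)" using sub Sx_finite by (rule card_mono[rotated])
  finally show ?thesis using yx wy by blast
qed

theorem lemma4:
  fixes k :: nat
  assumes "k \<ge> 3"
  shows "\<exists>c::real. c > 0 \<and> (\<exists>n0::nat. \<forall>n x x'. n \<ge> n0 \<longrightarrow> even n \<longrightarrow>
           weight n x \<ge> weight n x' \<longrightarrow>
           real (cycle_count (GX_edge n x) k) - real (cycle_count (GX_edge n x') k)
             \<ge> c * real n ^ (k - 2) * (real (weight n x) - real (weight n x')))"
proof (intro exI conjI allI impI)
  show "(1 / (2 * real k)) ^ (k - 2) > 0" using assms by simp
  fix n x x' assume n8: "8 * k \<le> n" and ev: "even n" and w: "weight n x' \<le> weight n x"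
  obtain y where yx: "\<forall>i<n div 2. y i \<longrightarrow> x i" and wy: "weight n y = weight n x'"
    and cy: "card (Sx n x' k) \<le> card (Sx n y k)" using iso[OF ev w] by blast
  have ws: "weight n x = weight n y + card {i. i < n div 2 \<and> x i \<and> \<not> y i}" by (rule weight_split[OF yx])
  have ch: "real (card (Sx n y k)) + real (card {i. i < n div 2 \<and> x i \<and> \<not> y i}) * (real n / (2 * real k)) ^ (k - 2)
      \<le> real (card (Sx n x k))" using chain[OF assms n8] yx by blast
  have eq: "(real n / (2 * real k)) ^ (k - 2) = (1 / (2 * real k)) ^ (k - 2) * real n ^ (k - 2)"
    by (simp add: power_divide)
  show "(1 / (2 * real k)) ^ (k - 2) * real n ^ (k - 2) * (real (weight n x) - real (weight n x'))
      \<le> real (cycle_count (GX_edge n x) k) - real (cycle_count (GX_edge n x') k)"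
    unfolding cc_Sx using ch cy ws wy eq by (simp add: algebra_simps)
qed

end
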